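(* Let $D$ be a digraph whose vertex set $V$ is a finite subset of $\mathbb{Z}_{>0}$, and let $\overline{D}$ be its complement. Then $\omega\,\Xi_D(\mathbf{x},t)=\Xi_{\overline{D}}(\mathbf{x},t)$.
   Context: A digraph is a finite directed graph without loops or multiple edges (both $u\to v$ and $v\to u$ may be present). The complement $\overline{D}$ has the same vertices and an edge $u\to v$ ($u\ne v$) iff $D$ has no edge $u\to v$. A composition $\beta=(\beta_1,\dots,\beta_\ell)$ of $n$ is a sequence of positive integers summing to $n$; it is identified with the set of "bars" $\{\beta_1,\beta_1+\beta_2,\dots,\beta_1+\cdots+\beta_{\ell-1}\}\subseteq[n-1]$; $\alpha\le\beta$ means the bar set of $\alpha$ is contained in that of $\beta$. The monomial quasisymmetric function is $M_\beta=\sum_{i_1<\cdots<i_\ell}x_{i_1}^{\beta_1}\cdots x_{i_\ell}^{\beta_\ell}$. The linear map $\omega$ on quasisymmetric functions of degree $n$ (extended coefficientwise to coefficients in $\mathbb{Z}[t]$) is $\omega M_\beta=(-1)^{n-\ell(\beta)}\sum_{\alpha\le\beta}M_\alpha$. Let $n=|V|$. A sequencing is a bijection $q:[n]\to V$. An ordered path cover of $D$ is a pair $(q,\beta)$ with $q$ a sequencing and $\beta$ a composition of $n$ such that, with $B_i=\beta_1+\cdots+\beta_i$ ($B_0=0$), $q(B_{i-1}+1)\to q(B_{i-1}+2)\to\cdots\to q(B_i)$ is a directed path in $D$ for every $i$. $\mathrm{asc}(q)$ is the number of pairs $\{u,v\}$ of vertices such that (1) either both $u\to v$ and $v\to u$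 are edges of $D$ or neither is, (2) $u<v$, and (3) $v$ appears later than $u$ in $q$. Then $\Xi_D(\mathbf{x},t)=\sum_{(q,\beta)}t^{\mathrm{asc}(q)}M_\beta$, summed over ordered path covers of $D$. *)

theory Defs
  imports "HOL-Computational_Algebra.Polynomial"
begin

definition is_comp :: "nat \<Rightarrow> nat list \<Rightarrow> bool" where
  "is_comp n \<beta> \<longleftrightarrow> (\<forall>b\<in>set \<beta>. 0 < b) \<and> sum_list \<beta> = n"

definition bars :: "nat list \<Rightarrow> nat set" where
  "bars \<beta> = {sum_list (take i \<beta>) | i. 1 \<le> i \<and> i < length \<beta>}"

definition comp_le :: "nat list \<Rightarrow> nat list \<Rightarrow> bool" where
  "comp_le \<alpha> \<beta> \<longleftrightarrow> bars \<alpha> \<subseteq> bars \<beta>"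

text \<open>A quasisymmetric function of degree n with coefficients in Z[t] is represented by its
  coefficient family in the monomial basis: f represents the sum over compositions beta of n
  of (f beta) * M_beta. (Values on non-compositions are irrelevant and kept 0.)\<close>
type_synonym qsym = "nat list \<Rightarrow> int poly"

text \<open>omega M_beta = (-1)^(n - l(beta)) * sum over alpha \<le> beta of M_alpha, extended linearly;
  the coefficient of M_alpha in omega(sum_beta c_beta M_beta) is
  sum over beta \<ge> alpha of (-1)^(n - l(beta)) c_beta.\<close>
definition omega :: "nat \<Rightarrow> qsym \<Rightarrow> qsym" where
  "omega n f \<alpha> = (if is_comp n \<alpha> then
      (\<Sum>\<beta>\<in>{\<beta>. is_comp n \<beta> \<and> comp_le \<alpha> \<beta>}. (-1) ^ (n - length \<beta>) * f \<beta>)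
    else 0)"

definition digraph :: "nat set \<Rightarrow> (nat \<times> nat) set \<Rightarrow> bool" where
  "digraph V E \<longleftrightarrow> finite V \<and> E \<subseteq> V \<times> V \<and> (\<forall>v. (v, v) \<notin> E)"

definition dcompl :: "nat set \<Rightarrow> (nat \<times> nat) set \<Rightarrow> (nat \<times> nat) set" where
  "dcompl V E = {(u, v). u \<in> V \<and> v \<in> V \<and> u \<noteq> v \<and> (u, v) \<notin> E}"

text \<open>Sequencings q : [n] \<rightarrow> V (bijections) are represented as lists qs with q(i) = qs ! (i-1).\<close>
definition sequencings :: "nat set \<Rightarrow> nat list set" where
  "sequencings V = {qs. distinct qs \<and> set qs = V}"

definition path_cover :: "nat set \<Rightarrow> (nat \<times> nat) set \<Rightarrow> nat list \<Rightarrow> nat list \<Rightarrow> bool" where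
  "path_cover V E qs \<beta> \<longleftrightarrow> qs \<in> sequencings V \<and> is_comp (card V) \<beta> \<and>
     (\<forall>j. 1 \<le> j \<and> j < card V \<and> j \<notin> bars \<beta> \<longrightarrow> (qs ! (j - 1), qs ! j) \<in> E)"

definition asc :: "nat set \<Rightarrow> (nat \<times> nat) set \<Rightarrow> nat list \<Rightarrow> nat" where
  "asc V E qs = card {(u, v). u \<in> V \<and> v \<in> V \<and> ((u, v) \<in> E \<longleftrightarrow> (v, u) \<in> E) \<and> u < v \<and>
      (\<exists>i j. i < j \<and> j < length qs \<and> qs ! i = u \<and> qs ! j = v)}"

definition Xi :: "nat set \<Rightarrow> (nat \<times> nat) set \<Rightarrow> qsym" where
  "Xi V E \<beta> = (\<Sum>qs\<in>{qs. path_cover V E qs \<beta>}. monom 1 (asc V E qs))"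

end

theory Submission imports Defs begin

fun psums :: "nat \<Rightarrow> nat list \<Rightarrow> nat list" where
  "psums a [] = []" | "psums a (b#bs) = (a+b) # psums (a+b) bs"
fun diffs :: "nat \<Rightarrow> nat list \<Rightarrow> nat list" where
  "diffs a [] = []" | "diffs a (y#ys) = (y - a) # diffs y ys"

lemma length_psums[simp]: "length (psums a bs) = length bs"
  by (induction bs arbitrary: a) auto

lemma psums_nth: "i < length bs \<Longrightarrow> psums a bs ! i = a + sum_list (take (Suc i) bs)"
  by (induction bs arbitrary: a i) (auto simp: nth_Cons split: nat.splits)

lemma diffs_psums[simp]: "diffs a (psums a bs) = bs"
  by (induction bs arbitrary: a) auto

lemma psums_diffs: "sorted (a#ys) \<Longrightarrow> psums a (diffs a ys) = ys"
  by (induction ys arbitrary: a) auto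

lemma diffs_pos: "sorted_wrt (<) (a#ys) \<Longrightarrow> \<forall>b\<in>set (diffs a ys). 0 < b"
  by (induction ys arbitrary: a) auto

lemma psums_sorted: "\<forall>b\<in>set bs. 0 < b \<Longrightarrow> sorted_wrt (<) (a # psums a bs)"
proof (induction bs arbitrary: a)
  case Nil then show ?case by simp
next
  case (Cons b bs)
  then have "sorted_wrt (<) ((a+b) # psums (a+b) bs)" by simp
  then show ?case using Cons.prems by auto
qed

lemma last_psums: "bs \<noteq> [] \<Longrightarrow> last (psums 0 bs) = sum_list bs"
proof -
  assume ne: "bs \<noteq> []"
  then have "psums 0 bs \<noteq> []" by (metis length_0_conv length_psums)
  then show ?thesis using psums_nth[of "length bs - 1" bs 0] ne by (simp add: last_conv_nth)
qed

lemma bars_psums: "bars bs = set (butlast (psums 0 bs))"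
proof -
  have "set (butlast (psums 0 bs)) = {psums 0 bs ! j | j. j < length bs - 1}"
    by (force simp: set_conv_nth nth_butlast)
  also have "\<dots> = {sum_list (take (Suc j) bs) | j. j < length bs - 1}"
  proof -
    have h: "\<forall>j\<in>{..<length bs - 1}. psums 0 bs ! j = sum_list (take (Suc j) bs)"
      using psums_nth[of _ bs 0] by auto
    have "(\<lambda>j. psums 0 bs ! j) ` {..<length bs - 1} = (\<lambda>j. sum_list (take (Suc j) bs)) ` {..<length bs - 1}"
      by (rule image_cong[OF refl]) (use h in blast)
    then show ?thesis by blast
  qed
  also have "\<dots> = bars bs" unfolding bars_def
  proof (intro set_eqI iffI)
    fix x assume "x \<in> {sum_list (take (Suc j) bs) | j. j < length bs - 1}"
    then obtain j where "x = sum_list (take (Suc j) bs)" "j < length bs - 1" by blast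
    then show "x \<in> {sum_list (take i bs) | i. 1 \<le> i \<and> i < length bs}"
      by (intro CollectI exI[of _ "Suc j"]) auto
  next
    fix x assume "x \<in> {sum_list (take i bs) | i. 1 \<le> i \<and> i < length bs}"
    then obtain i where "x = sum_list (take i bs)" "1 \<le> i" "i < length bs" by blast
    then show "x \<in> {sum_list (take (Suc j) bs) | j. j < length bs - 1}"
      by (intro CollectI exI[of _ "i - 1"]) auto
  qed
  finally show ?thesis by simp
qed

lemma is_comp_0: "is_comp 0 \<beta> \<longleftrightarrow> \<beta> = []"
  by (cases \<beta>) (auto simp: is_comp_def)

lemma len_le_sum: "\<forall>b\<in>set bs. 0 < b \<Longrightarrow> length bs \<le> sum_list bs"
  by (induction bs) auto

lemma finite_comps: "finite {\<beta>. is_comp n \<beta>}"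
proof (rule finite_subset)
  show "{\<beta>. is_comp n \<beta>} \<subseteq> {xs. set xs \<subseteq> {0..n} \<and> length xs \<le> n}"
    using len_le_sum by (auto simp: is_comp_def member_le_sum_list)
qed (rule finite_lists_length_le, simp)

lemma sorted_set_id: "sorted_wrt (<) (xs::nat list) \<Longrightarrow> sorted_list_of_set (set xs) = xs"
  by (metis sorted_list_of_set.strict_sorted_key_list_of_set strict_sorted_equal list.set_finite sorted_list_of_set.set_sorted_key_list_of_set)

context
  fixes n :: nat and \<beta> :: "nat list"
  assumes n: "0 < n" and c: "is_comp n \<beta>"
begin

lemma comp_ne: "\<beta> \<noteq> []" using n c by (auto simp: is_comp_def)
lemma comp_ps_sorted: "sorted_wrt (<) (0 # psums 0 \<beta>)"
  using c psums_sorted by (auto simp: is_comp_def)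
lemma comp_ps_last: "last (psums 0 \<beta>) = n"
  using comp_ne c last_psums by (auto simp: is_comp_def)
lemma comp_ps_split: "psums 0 \<beta> = butlast (psums 0 \<beta>) @ [n]"
  using comp_ne comp_ps_last
  by (metis append_butlast_last_id length_0_conv length_psums)

lemma comp_bars_sub: "bars \<beta> \<subseteq> {1..<n}"
proof
  fix x assume x: "x \<in> bars \<beta>"
  have s: "sorted_wrt (<) (0 # (butlast (psums 0 \<beta>) @ [n]))"
    using comp_ps_sorted comp_ps_split by metis
  from x have "x \<in> set (butlast (psums 0 \<beta>))" by (simp add: bars_psums)
  with s show "x \<in> {1..<n}" by (auto simp: sorted_wrt_append)
qed

lemma comp_len: "length \<beta> = card (bars \<beta>) + 1"
proof -
  have "distinct (psums 0 \<beta>)" using comp_ps_sorted strict_sorted_iff by auto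
  then have "distinct (butlast (psums 0 \<beta>))" by (simp add: distinct_butlast)
  then have "card (bars \<beta>) = length (psums 0 \<beta>) - 1"
    by (simp add: bars_psums distinct_card)
  then show ?thesis using comp_ne by simp
qed

lemma comp_inv: "diffs 0 (sorted_list_of_set (bars \<beta>) @ [n]) = \<beta>"
proof -
  have "sorted_wrt (<) (butlast (psums 0 \<beta>))"
    using comp_ps_sorted comp_ps_split by (metis sorted_wrt.simps(2) sorted_wrt_append)
  then have "sorted_list_of_set (bars \<beta>) = butlast (psums 0 \<beta>)"
    by (simp add: bars_psums sorted_set_id)
  then show ?thesis using comp_ps_split by (metis diffs_psums)
qed
end

lemma set_to_comp:
  assumes n: "0 < n" and S: "S \<subseteq> {1..<n}"
  shows "is_comp n (diffs 0 (sorted_list_of_set S @ [n])) \<and> bars (diffs 0 (sorted_list_of_set S @ [n])) = S"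
proof -
  define xs where "xs = sorted_list_of_set S"
  have fin: "finite S" using S finite_subset by blast
  have sx: "set xs = S" "sorted_wrt (<) xs" using fin by (auto simp: xs_def)
  have s: "sorted_wrt (<) (0 # xs @ [n])"
    using sx S n by (auto simp: sorted_wrt_append)
  then have s2: "sorted (0 # xs @ [n])"
    using sorted_wrt_mono_rel[of _ "(<)" "(\<le>)"] by (metis less_imp_le)
  let ?b = "diffs 0 (xs @ [n])"
  have ps: "psums 0 ?b = xs @ [n]" using psums_diffs[OF s2] .
  have ne: "?b \<noteq> []" by (cases xs) auto
  have "sum_list ?b = n" using last_psums[OF ne] ps by simp
  moreover have "\<forall>b\<in>set ?b. 0 < b" using diffs_pos[OF s] .
  moreover have "bars ?b = S" using ps sx by (simp add: bars_psums)
  ultimately show ?thesis by (simp add: is_comp_def xs_def)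
qed

lemma bars_bij:
  assumes "0 < n"
  shows "bij_betw bars {\<beta>. is_comp n \<beta>} (Pow {1..<n})"
  apply (rule bij_betw_byWitness[where f'="\<lambda>S. diffs 0 (sorted_list_of_set S @ [n])"])
  subgoal using assms comp_inv by blast
  subgoal using assms set_to_comp by blast
  subgoal using assms comp_bars_sub by blast
  subgoal using assms set_to_comp by blast
  done


lemma alt_pow: "finite W \<Longrightarrow> (\<Sum>R\<in>Pow W. (-1::'a::comm_ring_1)^card R) = (if W = {} then 1 else 0)"
proof (induction W rule: finite_induct)
  case empty then show ?case by simp
next
  case (insert x F)
  have inj: "inj_on (insert x) (Pow F)" using insert.hyps
    by (smt (verit, ccfv_SIG) PowD inj_on_def insert_ident subset_iff)
  have disj: "Pow F \<inter> insert x ` Pow F = {}" using insert.hyps by auto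
  have fin: "finite (Pow F)" "finite (insert x ` Pow F)" using insert.hyps by auto
  have "(\<Sum>R\<in>Pow (insert x F). (-1::'a)^card R)
      = (\<Sum>R\<in>Pow F. (-1::'a)^card R) + (\<Sum>R\<in>insert x ` Pow F. (-1::'a)^card R)"
    unfolding Pow_insert by (rule sum.union_disjoint[OF fin disj])
  also have "(\<Sum>R\<in>insert x ` Pow F. (-1::'a)^card R) = (\<Sum>R\<in>Pow F. (-1::'a)^card (insert x R))"
    by (rule sum.reindex[OF inj, unfolded comp_def])
  also have "\<dots> = (\<Sum>R\<in>Pow F. - ((-1::'a)^card R))"
  proof (rule sum.cong[OF refl])
    fix R assume "R \<in> Pow F"
    then have "finite R" "x \<notin> R" using insert.hyps finite_subset by auto
    then show "(-1::'a)^card (insert x R) = - ((-1::'a)^card R)" by simp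
  qed
  finally show ?case by (simp add: sum_negf)
qed

lemma minus_pow_diff: "b \<le> (a::nat) \<Longrightarrow> (-1::'a::comm_ring_1)^(a - b) = (-1)^a * (-1)^b"
proof -
  assume "b \<le> a"
  then obtain d where a: "a = b + d" using le_Suc_ex by blast
  have "(-1::'a)^b * (-1)^b = 1" by (simp add: power_add[symmetric])
  then have "(-1::'a)^a * (-1)^b = (-1)^d * ((-1)^b * (-1)^b)"
    unfolding a power_add by (simp add: algebra_simps)
  then show ?thesis using \<open>(-1::'a)^b * (-1)^b = 1\<close> a by simp
qed

lemma sign_sets:
  assumes "finite U" "T \<subseteq> U"
  shows "(\<Sum>S\<in>{S. S \<subseteq> U \<and> T \<subseteq> S}. (-1::'a::comm_ring_1)^(card U - card S)) = (if T = U then 1 else 0)"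
proof -
  define W where "W = U - T"
  have finW: "finite W" "finite T" using assms finite_subset W_def by auto
  have img: "{S. S \<subseteq> U \<and> T \<subseteq> S} = (\<lambda>R. T \<union> R) ` Pow W"
  proof
    show "{S. S \<subseteq> U \<and> T \<subseteq> S} \<subseteq> (\<lambda>R. T \<union> R) ` Pow W"
    proof
      fix S assume "S \<in> {S. S \<subseteq> U \<and> T \<subseteq> S}"
      then have "S = T \<union> (S - T)" "S - T \<in> Pow W" unfolding W_def by auto
      then show "S \<in> (\<lambda>R. T \<union> R) ` Pow W" by blast
    qed
  qed (use assms W_def in auto)
  have inj: "inj_on (\<lambda>R. T \<union> R) (Pow W)"
    unfolding inj_on_def W_def by blast
  have "(\<Sum>S\<in>{S. S \<subseteq> U \<and> T \<subseteq> S}. (-1::'a)^(card U - card S))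
      = (\<Sum>R\<in>Pow W. (-1::'a)^(card U - card (T \<union> R)))"
    unfolding img by (rule sum.reindex[OF inj, unfolded comp_def])
  also have "\<dots> = (\<Sum>R\<in>Pow W. (-1::'a)^card W * (-1)^card R)"
  proof (rule sum.cong[OF refl])
    fix R assume R: "R \<in> Pow W"
    then have fR: "finite R" using finW finite_subset by auto
    have "card (T \<union> R) = card T + card R"
      using R fR finW by (subst card_Un_disjoint) (auto simp: W_def)
    moreover have "card U = card T + card W"
      using assms finW unfolding W_def by (metis card_Diff_subset add_diff_inverse_nat card_mono diff_less_mono2 not_less_eq_eq less_imp_le_nat le_add_diff_inverse)
    moreover have "card R \<le> card W" using R finW card_mono by auto
    ultimately show "(-1::'a)^(card U - card (T \<union> R)) = (-1)^card W * (-1)^card R"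
      using minus_pow_diff[of "card R" "card W"] by simp
  qed
  also have "\<dots> = (-1)^card W * (if W = {} then 1 else 0)"
    by (simp add: sum_distrib_left[symmetric] alt_pow finW)
  also have "\<dots> = (if T = U then 1 else 0)" using assms W_def by auto
  finally show ?thesis .
qed

lemma bij_restrict: "bij_betw f A B \<Longrightarrow> bij_betw f {x\<in>A. P (f x)} {y\<in>B. P y}"
  unfolding bij_betw_def inj_on_def by auto

lemma bars_Nil[simp]: "bars [] = {}" by (simp add: bars_def)

lemma sign_comps:
  assumes T: "T \<subseteq> {1..<n}"
  shows "(\<Sum>\<beta>\<in>{\<beta>. is_comp n \<beta> \<and> T \<subseteq> bars \<beta>}. (-1::'a::comm_ring_1)^(n - length \<beta>))
         = (if T = {1..<n} then 1 else 0)"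
proof (cases "n = 0")
  case True
  then have "{\<beta>. is_comp n \<beta> \<and> T \<subseteq> bars \<beta>} = {[]}" "T = {}" using T by (auto simp: is_comp_0)
  then show ?thesis using True by simp
next
  case False
  then have n: "0 < n" by simp
  have b: "bij_betw bars {\<beta>\<in>{\<beta>. is_comp n \<beta>}. T \<subseteq> bars \<beta>} {S\<in>Pow {1..<n}. T \<subseteq> S}"
    by (rule bij_restrict[OF bars_bij[OF n]])
  have "(\<Sum>\<beta>\<in>{\<beta>. is_comp n \<beta> \<and> T \<subseteq> bars \<beta>}. (-1::'a)^(n - length \<beta>))
     = (\<Sum>\<beta>\<in>{\<beta>\<in>{\<beta>. is_comp n \<beta>}. T \<subseteq> bars \<beta>}. (-1::'a)^(card {1..<n} - card (bars \<beta>)))"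
    using comp_len[OF n] by (intro sum.cong) auto
  also have "\<dots> = (\<Sum>S\<in>{S\<in>Pow {1..<n}. T \<subseteq> S}. (-1::'a)^(card {1..<n} - card S))"
    by (rule sum.reindex_bij_betw[OF b])
  also have "{S\<in>Pow {1..<n}. T \<subseteq> S} = {S. S \<subseteq> {1..<n} \<and> T \<subseteq> S}" by auto
  finally show ?thesis using sign_sets[OF _ T] by simp
qed


theorem theorem3p8:
  fixes V :: "nat set" and E :: "(nat \<times> nat) set"
  assumes "digraph V E" and "0 \<notin> V"
  shows "omega (card V) (Xi V E) = Xi V (dcompl V E)"
proof (rule ext)
  fix \<alpha>
  define n where "n = card V"
  define F where "F = dcompl V E"
  define Q where "Q = sequencings V"
  have finV: "finite V" using assms(1) by (simp add: digraph_def)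
  have finQ: "finite Q" unfolding Q_def sequencings_def
    by (rule finite_subset[OF _ finite_subset_distinct[OF finV]]) auto
  have lenQ: "length qs = n" if "qs \<in> Q" for qs
    using that unfolding Q_def sequencings_def n_def by (auto simp: distinct_card)
  have iff: "(((u,v)\<in>F) \<longleftrightarrow> ((v,u)\<in>F)) \<longleftrightarrow> (((u,v)\<in>E) \<longleftrightarrow> ((v,u)\<in>E))"
    if "u\<in>V" "v\<in>V" "u\<noteq>v" for u v
    using that unfolding F_def dcompl_def by blast
  have asc_eq: "asc V F qs = asc V E qs" for qs
    unfolding asc_def
  proof (rule arg_cong[where f=card], rule set_eqI)
    fix x :: "nat \<times> nat"
    obtain u v where x: "x = (u,v)" by fastforce
    show "x \<in> {(u, v). u \<in> V \<and> v \<in> V \<and> ((u, v) \<in> F) = ((v, u) \<in> F) \<and> u < v \<and>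
      (\<exists>i j. i < j \<and> j < length qs \<and> qs ! i = u \<and> qs ! j = v)} \<longleftrightarrow>
      x \<in> {(u, v). u \<in> V \<and> v \<in> V \<and> ((u, v) \<in> E) = ((v, u) \<in> E) \<and> u < v \<and>
      (\<exists>i j. i < j \<and> j < length qs \<and> qs ! i = u \<and> qs ! j = v)}"
      unfolding x using iff[of u v] by auto
  qed
  have Xi_alt: "Xi V G \<beta> = (\<Sum>qs\<in>Q. if path_cover V G qs \<beta> then monom 1 (asc V G qs) else 0)" for G \<beta>
  proof -
    have "{qs. path_cover V G qs \<beta>} = {qs\<in>Q. path_cover V G qs \<beta>}"
      unfolding Q_def path_cover_def by auto
    then show ?thesis unfolding Xi_def by (simp add: sum.inter_filter[OF finQ])
  qed
  show "omega (card V) (Xi V E) \<alpha> = Xi V (dcompl V E) \<alpha>"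
  proof (cases "is_comp n \<alpha>")
    case False
    then show ?thesis unfolding omega_def Xi_alt n_def[symmetric]
      by (simp add: path_cover_def n_def)
  next
    case True
    have barsA: "bars \<alpha> \<subseteq> {1..<n}"
    proof (cases "n = 0")
      case True then show ?thesis using \<open>is_comp n \<alpha>\<close> by (simp add: is_comp_0)
    next
      case False then show ?thesis using comp_bars_sub \<open>is_comp n \<alpha>\<close> by simp
    qed
    define C where "C = {\<beta>. is_comp n \<beta> \<and> comp_le \<alpha> \<beta>}"
    have finC: "finite C" unfolding C_def by (rule finite_subset[OF _ finite_comps[of n]]) auto
    define m where "m qs = (monom 1 (asc V E qs) :: int poly)" for qs
    have key: "(\<Sum>\<beta>\<in>C. (-1)^(n - length \<beta>) * (if path_cover V E qs \<beta> then m qs else 0))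
        = (if path_cover V F qs \<alpha> then m qs else 0)" if qQ: "qs \<in> Q" for qs
    proof -
      define T where "T = bars \<alpha> \<union> {j. 1 \<le> j \<and> j < n \<and> (qs!(j-1), qs!j) \<notin> E}"
      have Tsub: "T \<subseteq> {1..<n}" using barsA unfolding T_def by auto
      have "(\<Sum>\<beta>\<in>C. (-1)^(n - length \<beta>) * (if path_cover V E qs \<beta> then m qs else 0))
          = (\<Sum>\<beta>\<in>C. (if path_cover V E qs \<beta> then (-1)^(n - length \<beta>) else 0)) * m qs"
        unfolding sum_distrib_right by (rule sum.cong[OF refl]) simp
      also have "\<dots> = (\<Sum>\<beta>\<in>{\<beta>\<in>C. path_cover V E qs \<beta>}. (-1)^(n - length \<beta>)) * m qs"
        by (simp add: sum.inter_filter[OF finC])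
      also have "{\<beta>\<in>C. path_cover V E qs \<beta>} = {\<beta>. is_comp n \<beta> \<and> T \<subseteq> bars \<beta>}"
        using qQ unfolding C_def T_def path_cover_def comp_le_def Q_def n_def by auto
      also have "(\<Sum>\<beta>\<in>{\<beta>. is_comp n \<beta> \<and> T \<subseteq> bars \<beta>}. (-1::int poly)^(n - length \<beta>))
          = (if T = {1..<n} then 1 else 0)" by (rule sign_comps[OF Tsub])
      also have "(T = {1..<n}) = path_cover V F qs \<alpha>"
      proof -
        have len: "length qs = n" using lenQ qQ .
        have dq: "distinct qs" "set qs = V" using qQ unfolding Q_def sequencings_def by auto
        have edge: "(qs!(j-1), qs!j) \<in> F \<longleftrightarrow> (qs!(j-1), qs!j) \<notin> E" if "1 \<le> j" "j < n" for j
        proof -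
          have j1: "j - 1 < length qs" "j < length qs" "j - 1 \<noteq> j" using that len by auto
          have "qs!(j-1) \<in> V" "qs!j \<in> V" using j1 dq nth_mem by blast+
          moreover have "qs!(j-1) \<noteq> qs!j" using j1 dq(1) nth_eq_iff_index_eq by blast
          ultimately show ?thesis unfolding F_def dcompl_def by auto
        qed
        have "(T = {1..<n}) \<longleftrightarrow> (\<forall>j. 1 \<le> j \<and> j < n \<and> j \<notin> bars \<alpha> \<longrightarrow> (qs!(j-1), qs!j) \<notin> E)"
          using Tsub unfolding T_def by auto
        also have "\<dots> \<longleftrightarrow> (\<forall>j. 1 \<le> j \<and> j < n \<and> j \<notin> bars \<alpha> \<longrightarrow> (qs!(j-1), qs!j) \<in> F)"
          using edge by auto
        also have "\<dots> \<longleftrightarrow> path_cover V F qs \<alpha>"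
          using qQ True unfolding path_cover_def Q_def n_def by auto
        finally show ?thesis .
      qed
      finally show ?thesis by simp
    qed
    have "omega (card V) (Xi V E) \<alpha> = (\<Sum>\<beta>\<in>C. (-1)^(n - length \<beta>) * Xi V E \<beta>)"
      unfolding omega_def C_def n_def using True n_def by simp
    also have "\<dots> = (\<Sum>\<beta>\<in>C. \<Sum>qs\<in>Q. (-1)^(n - length \<beta>) * (if path_cover V E qs \<beta> then m qs else 0))"
      unfolding Xi_alt m_def by (simp add: sum_distrib_left)
    also have "\<dots> = (\<Sum>qs\<in>Q. \<Sum>\<beta>\<in>C. (-1)^(n - length \<beta>) * (if path_cover V E qs \<beta> then m qs else 0))"
      by (rule sum.swap)
    also have "\<dots> = (\<Sum>qs\<in>Q. if path_cover V F qs \<alpha> then m qs else 0)"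
      using key by (rule sum.cong[OF refl])
    also have "\<dots> = Xi V F \<alpha>"
      unfolding Xi_alt m_def asc_eq ..
    finally show ?thesis unfolding F_def .
  qed
qed

end
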